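(* Let $G$ be a group with finite presentation $\mathcal P=\langle t,\mathcal A:\mathcal R,\ t^{-1}at=\phi(a)\ (a\in\mathcal A)\rangle$, $A=\langle\mathcal A\rangle\le G$, and $X$ its Cayley 2-complex. Let $C$ be a finite subcomplex of $X$, with $N(C)$ and $M(v,C)$ as in the context, and let $M(C)=\max\{M(v,C): v \text{ a vertex of } C\}$. Then every vertex $v\in C$ lies in $(t^{N(C)}At^{-N(C)})\,(t^{N(C)}\{1,t^{-1},\dots,t^{-M(C)}\})$. Moreover, for positive integers $M,N$ and any $w\in(t^NAt^{-N})(t^N\{1,t^{-1},\dots,t^{-M}\})$, we have $wA\subset(t^NAt^{-N})(t^N\{1,t^{-1},\dots,t^{-M}\})$.
   Context: $\mathcal A$ is finite, $\mathcal R\subset F(\mathcal A)$ finite, $\phi:F(\mathcal A)\to F(\mathcal A)$ a homomorphism. The Cayley 2-complex $X$ has vertex set $G$. For each vertex $v$ of $C$ write $v=t^{n(v)}a_vt^{-m(v)}$ with $a_v\in A$, $n(v),m(v)\ge0$; $N(C)=\max\{n(v):v\in C\}$ and $M(v,C)=N(C)-n(v)+m(v)$. Note $(t^NAt^{-N})(t^N\{1,\dots,t^{-M}\})=\{t^Nat^{-m}:a\in A,\ 0\le m\le M\}$. *)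

theory Defs
  imports "HOL-Algebra.Algebra"
begin

text \<open>Words in a free group on an alphabet of type 'x: a letter is (x, b) where
  b = True means the inverse generator x^-1.\<close>
type_synonym 'x word = "('x \<times> bool) list"

definition inv_word :: "'x word \<Rightarrow> 'x word" where
  "inv_word w = rev (map (\<lambda>(x, b). (x, \<not> b)) w)"

definition eval_word :: "('g, 'c) monoid_scheme \<Rightarrow> ('x \<Rightarrow> 'g) \<Rightarrow> 'x word \<Rightarrow> 'g" where
  "eval_word G f w =
     foldr (\<lambda>(x, b) acc. (if b then inv\<^bsub>G\<^esub> (f x) else f x) \<otimes>\<^bsub>G\<^esub> acc) w \<one>\<^bsub>G\<^esub>"

inductive pres_eq :: "'x word set \<Rightarrow> 'x word \<Rightarrow> 'x word \<Rightarrow> bool" for Rel where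
  refl: "pres_eq Rel w w"
| sym: "pres_eq Rel w w' \<Longrightarrow> pres_eq Rel w' w"
| trans: "pres_eq Rel u v \<Longrightarrow> pres_eq Rel v w \<Longrightarrow> pres_eq Rel u w"
| cancel: "pres_eq Rel (u @ [(x, b), (x, \<not> b)] @ v) (u @ v)"
| relator: "r \<in> Rel \<Longrightarrow> pres_eq Rel (u @ r @ v) (u @ v)"

definition word_over :: "'x set \<Rightarrow> 'x word \<Rightarrow> bool" where
  "word_over S w \<longleftrightarrow> fst ` set w \<subseteq> S"

definition is_presentation ::
  "('g, 'c) monoid_scheme \<Rightarrow> 'x set \<Rightarrow> 'x word set \<Rightarrow> ('x \<Rightarrow> 'g) \<Rightarrow> bool" where
  "is_presentation G S Rel f \<longleftrightarrow>
     group G \<and> f ` S \<subseteq> carrier G \<and> generate G (f ` S) = carrier G \<and>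
     (\<forall>w. word_over S w \<longrightarrow> (eval_word G f w = \<one>\<^bsub>G\<^esub> \<longleftrightarrow> pres_eq Rel w []))"

text \<open>The relators of P = < t, A : R, t^-1 a t = phi(a) (a in A) >, on the alphabet
  'a option, where None stands for t and Some a for a in A.\<close>
definition HNN_relators :: "'a set \<Rightarrow> 'a word set \<Rightarrow> ('a \<Rightarrow> 'a word) \<Rightarrow> 'a option word set" where
  "HNN_relators \<A> R \<phi> =
     (map (\<lambda>(x, b). (Some x, b)) ` R) \<union>
     ((\<lambda>a. [(None, True), (Some a, False), (None, False)]
            @ inv_word (map (\<lambda>(x, b). (Some x, b)) (\<phi> a))) ` \<A>)"

definition TAset :: "('g, 'c) monoid_scheme \<Rightarrow> 'g \<Rightarrow> 'g set \<Rightarrow> nat \<Rightarrow> nat \<Rightarrow> 'g set" where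
  "TAset G t A N M =
     set_mult G ((\<lambda>a. t [^]\<^bsub>G\<^esub> N \<otimes>\<^bsub>G\<^esub> a \<otimes>\<^bsub>G\<^esub> inv\<^bsub>G\<^esub> (t [^]\<^bsub>G\<^esub> N)) ` A)
                {t [^]\<^bsub>G\<^esub> N \<otimes>\<^bsub>G\<^esub> inv\<^bsub>G\<^esub> (t [^]\<^bsub>G\<^esub> k) | k. k \<le> M}"

end

theory Submission
  imports Defs
begin

lemma eval_word_Nil[simp]: "eval_word G f [] = \<one>\<^bsub>G\<^esub>"
  by (simp add: eval_word_def)

lemma eval_word_Cons[simp]:
  "eval_word G f ((x,b) # w) = (if b then inv\<^bsub>G\<^esub> (f x) else f x) \<otimes>\<^bsub>G\<^esub> eval_word G f w"
  by (simp add: eval_word_def)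

lemma (in group) eval_word_closed:
  assumes "subgroup H G" "\<forall>x\<in>fst ` set w. f x \<in> H"
  shows "eval_word G f w \<in> H"
  using assms(2)
proof (induction w)
  case Nil then show ?case using subgroup.one_closed[OF assms(1)] by simp
next
  case (Cons p w)
  obtain x b where p: "p = (x,b)" by force
  have fx: "f x \<in> H" using Cons.prems p by auto
  have "eval_word G f w \<in> H" using Cons by auto
  then show ?case using p fx subgroup.m_closed[OF assms(1)] subgroup.m_inv_closed[OF assms(1)]
    by auto
qed

lemma (in group) eval_word_append:
  assumes "\<forall>x\<in>fst ` set u. f x \<in> carrier G" "\<forall>x\<in>fst ` set v. f x \<in> carrier G"
  shows "eval_word G f (u @ v) = eval_word G f u \<otimes> eval_word G f v"
  using assms(1)
proof (induction u)
  case Nil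
  have "eval_word G f v \<in> carrier G"
    using eval_word_closed[OF subgroup_self] assms(2) by blast
  then show ?case by simp
next
  case (Cons p u)
  obtain x b where p: "p = (x,b)" by force
  have fx: "f x \<in> carrier G" using Cons.prems p by auto
  have "eval_word G f u \<in> carrier G" "eval_word G f v \<in> carrier G"
    using eval_word_closed[OF subgroup_self] assms(2) Cons.prems by auto
  then show ?case using p fx Cons by (simp add: m_assoc)
qed


lemma (in group) canc1[simp]: "y \<in> carrier G \<Longrightarrow> z \<in> carrier G \<Longrightarrow> y \<otimes> (inv y \<otimes> z) = z"
  by (simp add: m_assoc[symmetric])

lemma (in group) canc2[simp]: "y \<in> carrier G \<Longrightarrow> z \<in> carrier G \<Longrightarrow> inv y \<otimes> (y \<otimes> z) = z"
  by (simp add: m_assoc[symmetric])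

lemma (in group) lemma5p3_aux:
  fixes \<A> :: "'x set" and R :: "'x word set" and \<phi> :: "'x \<Rightarrow> 'x word"
    and f :: "'x option \<Rightarrow> 'a"
    and V :: "'a set"
    and n m :: "'a \<Rightarrow> nat" and av :: "'a \<Rightarrow> 'a"
  assumes fin_A: "finite \<A>" and fin_R: "finite R"
    and R_over: "\<forall>r\<in>R. word_over \<A> r"
    and phi_over: "\<forall>a\<in>\<A>. word_over \<A> (\<phi> a)"
    and pres: "is_presentation G (insert None (Some ` \<A>)) (HNN_relators \<A> R \<phi>) f"
    and V_fin: "finite V" and V_ne: "V \<noteq> {}" and V_sub: "V \<subseteq> carrier G"
    and nf: "\<forall>v\<in>V. av v \<in> generate G (f ` Some ` \<A>) \<and>
               v = f None [^]\<^bsub>G\<^esub> n v \<otimes>\<^bsub>G\<^esub> av v \<otimes>\<^bsub>G\<^esub> inv\<^bsub>G\<^esub> (f None [^]\<^bsub>G\<^esub> m v)"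
  shows "(let N = Max (n ` V);
              Mv = (\<lambda>v. N - n v + m v);
              MC = Max (Mv ` V)
          in \<forall>v\<in>V. v \<in> TAset G (f None) (generate G (f ` Some ` \<A>)) N MC)
      \<and> (\<forall>M N w. 0 < M \<and> 0 < N \<and> w \<in> TAset G (f None) (generate G (f ` Some ` \<A>)) N M
            \<longrightarrow> set_mult G {w} (generate G (f ` Some ` \<A>))
                  \<subseteq> TAset G (f None) (generate G (f ` Some ` \<A>)) N M)"
proof -
  have grp: "group G" and fS: "f ` (insert None (Some ` \<A>)) \<subseteq> carrier G"
    and pe: "\<forall>w. word_over (insert None (Some ` \<A>)) w \<longrightarrow>
        (eval_word G f w = \<one>\<^bsub>G\<^esub> \<longleftrightarrow> pres_eq (HNN_relators \<A> R \<phi>) w [])"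
    using pres unfolding is_presentation_def by auto
  define t where "t = f None"
  define H where "H = generate G (f ` Some ` \<A>)"
  have t: "t \<in> carrier G" using fS t_def by auto
  have gsub: "f ` Some ` \<A> \<subseteq> carrier G" using fS by auto
  have Hsub: "subgroup H G" unfolding H_def by (rule generate_is_subgroup[OF gsub])
  have Hc: "H \<subseteq> carrier G" using subgroup.subset[OF Hsub] .
  have gen: "inv t \<otimes> f (Some a) \<otimes> t \<in> H" if a: "a \<in> \<A>" for a
  proof -
    define w' where "w' = map (\<lambda>(x, b). (Some x, b)) (\<phi> a)"
    define r where "r = [(None, True), (Some a, False), (None, False)] @ inv_word w'"
    have rR: "r \<in> HNN_relators \<A> R \<phi>" unfolding HNN_relators_def r_def w'_def using a by blast
    have "pres_eq (HNN_relators \<A> R \<phi>) ([] @ r @ []) ([] @ [])"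
      by (rule pres_eq.relator[OF rR])
    hence pr: "pres_eq (HNN_relators \<A> R \<phi>) r []" by simp
    have fw: "fst ` set (inv_word w') \<subseteq> Some ` \<A>"
      using phi_over a unfolding inv_word_def w'_def word_over_def by force
    have wo: "word_over (insert None (Some ` \<A>)) r"
      using fw a unfolding r_def word_over_def by auto
    have ev1: "eval_word G f r = \<one>" using pe pr wo by blast
    have eH: "eval_word G f (inv_word w') \<in> H"
      apply (rule eval_word_closed[OF Hsub])
      using fw unfolding H_def by (force intro: generate.incl)
    have ec: "eval_word G f (inv_word w') \<in> carrier G" using eH Hc by auto
    have fa: "f (Some a) \<in> carrier G" using fS a by auto
    have "eval_word G f r = inv t \<otimes> (f (Some a) \<otimes> (t \<otimes> eval_word G f (inv_word w')))"
      unfolding r_def t_def by simp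
    hence "(inv t \<otimes> f (Some a) \<otimes> t) \<otimes> eval_word G f (inv_word w') = \<one>"
      using ev1 t fa ec by (simp add: m_assoc)
    hence "inv (eval_word G f (inv_word w')) = inv t \<otimes> f (Some a) \<otimes> t"
      by (rule inv_equality) (use ec t fa in auto)
    thus ?thesis using eH subgroup.m_inv_closed[OF Hsub] by metis
  qed
  have conj1: "inv t \<otimes> x \<otimes> t \<in> H" if x: "x \<in> H" for x
    using x unfolding H_def
  proof (induction x rule: generate.induct)
    case one then show ?case using t subgroup.one_closed[OF Hsub] H_def by simp
  next
    case (incl h) then show ?case using gen H_def by auto
  next
    case (inv h)
    then obtain a where a: "a \<in> \<A>" "h = f (Some a)" by auto
    have hc: "h \<in> carrier G" using a fS by auto
    have "inv t \<otimes> inv h \<otimes> t = inv (inv t \<otimes> h \<otimes> t)"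
      using hc t by (simp add: inv_mult_group m_assoc)
    then show ?case using gen[OF a(1)] a(2) subgroup.m_inv_closed[OF Hsub] H_def by metis
  next
    case (eng h1 h2)
    have c: "h1 \<in> carrier G" "h2 \<in> carrier G" using eng.hyps Hc H_def by auto
    have "inv t \<otimes> (h1 \<otimes> h2) \<otimes> t = (inv t \<otimes> h1 \<otimes> t) \<otimes> (inv t \<otimes> h2 \<otimes> t)"
      using c t by (simp add: m_assoc)
    then show ?case using eng.IH subgroup.m_closed[OF Hsub] H_def by metis
  qed
  have conjk: "inv (t [^] k) \<otimes> x \<otimes> t [^] k \<in> H" if x: "x \<in> H" for x and k :: nat
  proof (induction k)
    case 0 then show ?case using x Hc by auto
  next
    case (Suc k)
    have xc: "x \<in> carrier G" using x Hc by auto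
    have "inv (t [^] Suc k) \<otimes> x \<otimes> t [^] Suc k = inv t \<otimes> (inv (t [^] k) \<otimes> x \<otimes> t [^] k) \<otimes> t"
      using xc t by (simp add: inv_mult_group m_assoc)
    then show ?case using conj1[OF Suc.IH] by simp
  qed
  show ?thesis
  proof
    show "let N = Max (n ` V); Mv = (\<lambda>v. N - n v + m v); MC = Max (Mv ` V)
          in \<forall>v\<in>V. v \<in> TAset G (f None) (generate G (f ` Some ` \<A>)) N MC"
      unfolding Let_def
    proof
      fix v assume v: "v \<in> V"
      define N where "N = Max (n ` V)"
      define MC where "MC = Max ((\<lambda>v. N - n v + m v) ` V)"
      define d where "d = N - n v"
      define k where "k = m v + d"
      have nN: "n v \<le> N" unfolding N_def using v V_fin by auto
      have kM: "k \<le> MC" unfolding MC_def k_def d_def using v V_fin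
        by (metis (no_types, lifting) Max_ge add.commute finite_imageI image_eqI)
      have aH: "av v \<in> H" and veq: "v = t [^] n v \<otimes> av v \<otimes> inv (t [^] m v)"
        using nf v unfolding H_def t_def by auto
      have ac: "av v \<in> carrier G" using aH Hc by auto
      define a' where "a' = inv (t [^] d) \<otimes> av v \<otimes> t [^] d"
      have a'H: "a' \<in> H" unfolding a'_def by (rule conjk[OF aH])
      have tN: "t [^] N = t [^] n v \<otimes> t [^] d"
        using nat_pow_mult[OF t, of "n v" d] nN d_def by simp
      have tk: "t [^] k = t [^] m v \<otimes> t [^] d"
        using nat_pow_mult[OF t, of "m v" d] k_def by simp
      have "(t [^] N \<otimes> a' \<otimes> inv (t [^] N)) \<otimes> (t [^] N \<otimes> inv (t [^] k)) = t [^] n v \<otimes> av v \<otimes> inv (t [^] m v)"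
        unfolding tN tk a'_def using t ac by (simp add: m_assoc inv_mult_group)
      hence "(t [^] N \<otimes> a' \<otimes> inv (t [^] N)) \<otimes> (t [^] N \<otimes> inv (t [^] k)) = v"
        using veq by simp
      then show "v \<in> TAset G (f None) (generate G (f ` Some ` \<A>)) (Max (n ` V))
           (Max ((\<lambda>v. Max (n ` V) - n v + m v) ` V))"
        unfolding TAset_def set_mult_def N_def[symmetric] MC_def[symmetric] t_def[symmetric]
          H_def[symmetric]
        using a'H kM by blast
    qed
  next
    show "\<forall>M N w. 0 < M \<and> 0 < N \<and> w \<in> TAset G (f None) (generate G (f ` Some ` \<A>)) N M
            \<longrightarrow> set_mult G {w} (generate G (f ` Some ` \<A>))
                  \<subseteq> TAset G (f None) (generate G (f ` Some ` \<A>)) N M"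
      unfolding t_def[symmetric] H_def[symmetric]
    proof (intro allI impI subsetI)
      fix M N w y
      assume "0 < M \<and> 0 < N \<and> w \<in> TAset G t H N M" and y: "y \<in> set_mult G {w} H"
      then obtain a k where a: "a \<in> H" and kM: "k \<le> M"
        and w: "w = (t [^] N \<otimes> a \<otimes> inv (t [^] N)) \<otimes> (t [^] N \<otimes> inv (t [^] k))"
        unfolding TAset_def set_mult_def by blast
      obtain b where b: "b \<in> H" and yb: "y = w \<otimes> b" using y unfolding set_mult_def by blast
      define b' where "b' = inv (t [^] k) \<otimes> b \<otimes> t [^] k"
      have b'H: "b' \<in> H" unfolding b'_def by (rule conjk[OF b])
      have abH: "a \<otimes> b' \<in> H" using a b'H subgroup.m_closed[OF Hsub] by auto
      have ac: "a \<in> carrier G" "b \<in> carrier G" using a b Hc by auto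
      have "(t [^] N \<otimes> (a \<otimes> b') \<otimes> inv (t [^] N)) \<otimes> (t [^] N \<otimes> inv (t [^] k)) = y"
        unfolding yb w b'_def using t ac by (simp add: m_assoc)
      then show "y \<in> TAset G t H N M"
        unfolding TAset_def set_mult_def using abH kM by blast
    qed
  qed
qed


theorem lemma5p3:
  fixes G :: "('g, 'c) monoid_scheme"
    and \<A> :: "'a set" and R :: "'a word set" and \<phi> :: "'a \<Rightarrow> 'a word"
    and f :: "'a option \<Rightarrow> 'g"
    and V :: "'g set"
    and n m :: "'g \<Rightarrow> nat" and av :: "'g \<Rightarrow> 'g"
  assumes fin_A: "finite \<A>" and fin_R: "finite R"
    and R_over: "\<forall>r\<in>R. word_over \<A> r"
    and phi_over: "\<forall>a\<in>\<A>. word_over \<A> (\<phi> a)"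
    and pres: "is_presentation G (insert None (Some ` \<A>)) (HNN_relators \<A> R \<phi>) f"
    and V_fin: "finite V" and V_ne: "V \<noteq> {}" and V_sub: "V \<subseteq> carrier G"
    and nf: "\<forall>v\<in>V. av v \<in> generate G (f ` Some ` \<A>) \<and>
               v = f None [^]\<^bsub>G\<^esub> n v \<otimes>\<^bsub>G\<^esub> av v \<otimes>\<^bsub>G\<^esub> inv\<^bsub>G\<^esub> (f None [^]\<^bsub>G\<^esub> m v)"
  shows "(let N = Max (n ` V);
              Mv = (\<lambda>v. N - n v + m v);
              MC = Max (Mv ` V)
          in \<forall>v\<in>V. v \<in> TAset G (f None) (generate G (f ` Some ` \<A>)) N MC)
      \<and> (\<forall>M N w. 0 < M \<and> 0 < N \<and> w \<in> TAset G (f None) (generate G (f ` Some ` \<A>)) N M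
            \<longrightarrow> set_mult G {w} (generate G (f ` Some ` \<A>))
                  \<subseteq> TAset G (f None) (generate G (f ` Some ` \<A>)) N M)"
  using group.lemma5p3_aux[OF _ assms] pres unfolding is_presentation_def by blast

end
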